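(* Let $q$ be a prime. For integers $a,b,m,\lambda$ with $\gcd(am\lambda,q)=1$ and a real number $N\geqslant 1$, define \[ U_{a,b,\lambda}(m,N)=\sum_{n\leqslant N}\ \sum_{\substack{x\in\{0,1,\ldots,q-1\}\\ x^2\equiv amn+b \bmod q}} \exp(2\pi i \lambda x/q), \] where $n$ runs over positive integers $n\leqslant N$. Then \[ U_{a,b,\lambda}(m,N)\ll q^{1/2}\log q, \] uniformly over all real $N\geqslant 1$ and all integers $a,b,m,\lambda$ with $\gcd(am\lambda,q)=1$.
   Context: $q$ is a (large) prime number and $\mathbb{F}_q$ is represented by $\{0,1,\ldots,q-1\}$. The notation $X\ll Y$ means $|X|\leqslant cY$ for an absolute constant $c>0$. *)

theory Defs
  imports "HOL-Analysis.Analysis" "HOL-Number_Theory.Cong"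
begin

definition U_sum :: "int \<Rightarrow> int \<Rightarrow> int \<Rightarrow> int \<Rightarrow> int \<Rightarrow> real \<Rightarrow> complex" where
  "U_sum q a b l m N =
     (\<Sum>n\<in>{1..\<lfloor>N\<rfloor>}. \<Sum>x\<in>{x\<in>{0..q-1}. [x^2 = a*m*n + b] (mod q)}.
        exp (2 * pi * \<i> * of_int (l * x) / of_int q))"

end

theory Submission
  imports Defs
begin

definition ee :: "int \<Rightarrow> int \<Rightarrow> complex" where
  "ee q k = exp (2 * pi * \<i> * of_int k / of_int q)"

lemma ee_add: "ee q (a + b) = ee q a * ee q b"
  unfolding ee_def by (simp add: exp_add[symmetric] add_divide_distrib distrib_left)

lemma ee_mult_q: "q \<noteq> 0 \<Longrightarrow> ee q (q * j) = 1"
proof -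
  assume q: "q \<noteq> 0"
  have "2 * pi * \<i> * of_int (q * j) / of_int q = complex_of_real (2 * of_int j * pi) * \<i>"
    using q by (simp add: field_simps)
  then show ?thesis unfolding ee_def
    by (metis exp_integer_2pi Ints_of_int)
qed

lemma ee_mod: "q \<noteq> 0 \<Longrightarrow> ee q (k mod q) = ee q k"
proof -
  assume q: "q \<noteq> 0"
  have "ee q k = ee q (k mod q + q * (k div q))" by (simp only: mod_mult_div_eq)
  also have "\<dots> = ee q (k mod q)" by (simp only: ee_add ee_mult_q[OF q] mult_1_right)
  finally show ?thesis by simp
qed

lemma norm_ee [simp]: "cmod (ee q k) = 1"
  unfolding ee_def by (simp add: norm_exp_eq_Re)

lemma cnj_ee: "cnj (ee q k) = ee q (-k)"
  unfolding ee_def by (simp add: exp_cnj)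

lemma ee_eq_1_iff: "q > 0 \<Longrightarrow> ee q k = 1 \<longleftrightarrow> q dvd k"
proof
  assume q: "q > 0" and "ee q k = 1"
  then obtain n :: int where "Im (2 * pi * \<i> * of_int k / of_int q) = of_int (2*n) * pi"
    unfolding ee_def exp_eq_1 by blast
  then have "2 * pi * k / q = 2 * n * pi" by simp
  then have "real_of_int k = real_of_int (q * n)" using q by (simp add: field_simps)
  then have "k = q * n" by (simp only: of_int_eq_iff)
  then show "q dvd k" by simp
next
  assume "q > 0" "q dvd k" then show "ee q k = 1" using ee_mult_q by (auto elim!: dvdE)
qed

lemma ee_zero [simp]: "ee q 0 = 1" by (simp add: ee_def)

lemma ee_pow: "ee q (int i * k) = ee q k ^ i"
  by (induction i) (simp_all add: distrib_right ee_add)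


lemma sum_int_nat: "(\<Sum>h\<in>{0..q-1}. f h) = (\<Sum>i<nat q. f (int i))"
proof (cases "q \<ge> 0")
  case True
  have "int ` {..<nat q} = {0..<q}" using True by (simp add: lessThan_atLeast0 image_int_atLeastLessThan)
  moreover have "{0..q-1} = {0..<q}" by auto
  ultimately have "{0..q-1} = int ` {..<nat q}" by simp
  then show ?thesis by (simp add: sum.reindex)
next
  case False then show ?thesis by simp
qed

lemma orth:
  assumes q: "q > 0"
  shows "(\<Sum>h\<in>{0..q-1}. ee q (h * k)) = (if q dvd k then of_int q else 0)"
proof -
  have "(\<Sum>h\<in>{0..q-1}. ee q (h * k)) = (\<Sum>i<nat q. ee q k ^ i)"
    by (simp add: sum_int_nat ee_pow)
  also have "\<dots> = (if q dvd k then of_int q else 0)"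
  proof (cases "q dvd k")
    case True
    then have "ee q k = 1" using ee_eq_1_iff q by blast
    then show ?thesis using True q by simp
  next
    case False
    then have z: "ee q k \<noteq> 1" using ee_eq_1_iff q by blast
    have "ee q (int (nat q) * k) = ee q k ^ nat q" by (rule ee_pow)
    moreover have "ee q (int (nat q) * k) = 1" using q ee_mult_q[of q k] by simp
    ultimately have "ee q k ^ nat q = 1" by simp
    then have "(ee q k - 1) * (\<Sum>i<nat q. ee q k ^ i) = 0"
      using power_diff_1_eq[of "ee q k" "nat q"] by simp
    then show ?thesis using z False by simp
  qed
  finally show ?thesis .
qed

lemma sum_int_nat1: "(\<Sum>n\<in>{1..M}. f n) = (\<Sum>i<nat M. f (int i + 1))"
proof -
  have "{1..M} = (\<lambda>i. int i + 1) ` {..<nat M}"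
  proof (intro set_eqI iffI)
    fix n assume "n \<in> {1..M}"
    then have "n = int (nat (n - 1)) + 1" "nat (n-1) \<in> {..<nat M}" by auto
    then show "n \<in> (\<lambda>i. int i + 1) ` {..<nat M}" by blast
  qed auto
  moreover have "inj_on (\<lambda>i. int i + 1) {..<nat M}" by (auto simp: inj_on_def)
  ultimately show ?thesis by (simp add: sum.reindex)
qed

lemma geo_bound:
  fixes z :: complex
  assumes "z \<noteq> 1" "cmod z = 1"
  shows "cmod (\<Sum>i<M. z ^ Suc i) \<le> 2 / cmod (1 - z)"
proof -
  have "(1 - z) * (\<Sum>i<M. z ^ Suc i) = z * ((1 - z) * (\<Sum>i<M. z ^ i))"
    by (simp add: sum_distrib_left mult_ac)
  also have "\<dots> = z * (1 - z ^ M)" by (simp add: one_diff_power_eq)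
  finally have "(1 - z) * (\<Sum>i<M. z ^ Suc i) = z * (1 - z ^ M)" .
  then have "cmod (1 - z) * cmod (\<Sum>i<M. z ^ Suc i) = cmod (1 - z ^ M)"
    using assms by (metis norm_mult mult_1)
  also have "\<dots> \<le> 2" using norm_triangle_ineq4[of 1 "z^M"] assms by (simp add: norm_power)
  finally have "cmod (1 - z) * cmod (\<Sum>i<M. z ^ Suc i) \<le> 2" .
  moreover have "cmod (1 - z) > 0" using assms by simp
  ultimately show ?thesis by (simp add: field_simps mult.commute)
qed

lemma S_bound:
  assumes q: "q > 0" and nd: "\<not> q dvd k"
  shows "cmod (\<Sum>n\<in>{1..M}. ee q (n * k)) \<le> 2 / cmod (1 - ee q k)"
proof -
  have "(\<Sum>n\<in>{1..M}. ee q (n * k)) = (\<Sum>i<nat M. ee q k ^ Suc i)"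
    unfolding sum_int_nat1 by (metis ee_pow of_nat_Suc add.commute)
  moreover have "ee q k \<noteq> 1" using ee_eq_1_iff q nd by blast
  ultimately show ?thesis using geo_bound[of "ee q k" "nat M"] by simp
qed

lemma sin_third:
  fixes x :: real
  assumes "0 \<le> x" "x \<le> 2"
  shows "sin x \<ge> x / 3"
proof -
  have "\<bar>sin x - (\<Sum>m<3. sin_coeff m * x ^ m)\<bar> \<le> inverse (fact 3) * \<bar>x\<bar> ^ 3"
    by (rule Maclaurin_sin_bound)
  moreover have "(\<Sum>m<3. sin_coeff m * x ^ m) = x"
    by (simp add: sin_coeff_def eval_nat_numeral)
  ultimately have b: "\<bar>sin x - x\<bar> \<le> inverse (fact 3) * \<bar>x\<bar> ^ 3" by simp
  have "inverse (fact 3) * \<bar>x\<bar> ^ 3 = x^3 / 6" using assms by (simp add: eval_nat_numeral)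
  with b have "\<bar>sin x - x\<bar> \<le> x^3 / 6" by simp
  then have "sin x \<ge> x - x^3 / 6" by (simp only: abs_le_iff) linarith
  moreover have "x^3 \<le> 4 * x"
  proof -
    have "x * x \<le> 2 * 2" using assms by (intro mult_mono) auto
    then have "x * (x * x) \<le> x * 4" using assms by (intro mult_left_mono) auto
    then show ?thesis by (simp add: power3_eq_cube mult.commute)
  qed
  ultimately show ?thesis by linarith
qed

lemma norm_1_minus_exp: "cmod (1 - exp (\<i> * of_real t)) = 2 * \<bar>sin (t/2)\<bar>"
proof -
  define s where "s = t / 2"
  have t: "t = 2 * s" by (simp add: s_def)
  have "exp (\<i> * of_real t) = cis t" by (simp add: cis_conv_exp)
  then have "cmod (1 - exp (\<i> * of_real t)) = sqrt ((1 - cos t)^2 + (sin t)^2)"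
    by (simp add: cmod_def)
  also have "(1 - cos t)^2 + (sin t)^2 = (2 * sin s)^2"
  proof -
    have c: "(cos s)^2 = 1 - (sin s)^2" by (rule cos_squared_eq)
    have "(1 - cos t)^2 + (sin t)^2 = (2 * (sin s)^2)^2 + 4 * (sin s)^2 * (cos s)^2"
      unfolding t cos_double_sin sin_double by (simp add: power_mult_distrib)
    also have "\<dots> = (2 * sin s)^2" unfolding c by (simp add: power2_eq_square algebra_simps)
    finally show ?thesis .
  qed
  finally have "cmod (1 - exp (\<i> * of_real t)) = sqrt ((2 * sin s)^2)" .
  then show ?thesis unfolding real_sqrt_abs by (simp add: s_def abs_mult)
qed


lemma ee_alt: "ee q r = exp (\<i> * of_real (2 * pi * r / q))"
  unfolding ee_def by (simp add: mult_ac)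

lemma one_minus_ee_lower:
  assumes q: "q > 0" and r: "0 < r" "2 * r \<le> q"
  shows "cmod (1 - ee q r) \<ge> 2 * r / q"
proof -
  define x where "x = pi * r / q"
  have "cmod (1 - ee q r) = 2 * \<bar>sin x\<bar>"
    unfolding ee_alt norm_1_minus_exp x_def by simp
  have x0: "0 \<le> x" using q r by (simp add: x_def)
  have "x \<le> pi / 2" using q r by (simp add: x_def field_simps)
  then have x2: "x \<le> 2" using pi_less_4 by linarith
  have "sin x \<ge> x / 3" using sin_third x0 x2 by blast
  then have "2 * \<bar>sin x\<bar> \<ge> 2 * x / 3" using x0 by linarith
  moreover have "2 * x / 3 \<ge> 2 * r / q"
  proof -
    have "pi * r \<ge> 3 * r" using pi_gt3 r by simp
    then show ?thesis using q by (simp add: x_def field_simps)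
  qed
  ultimately show ?thesis using \<open>cmod (1 - ee q r) = 2 * \<bar>sin x\<bar>\<close> by linarith
qed

lemma harm_le_ln: "n \<ge> 1 \<Longrightarrow> (harm n :: real) \<le> 1 + ln n"
proof (induction n rule: dec_induct)
  case base then show ?case by (simp add: harm_def)
next
  case (step n)
  have n: "real n > 0" using step by simp
  have "ln (real n / real (Suc n)) \<le> real n / real (Suc n) - 1"
    using n by (intro ln_le_minus_one) simp
  then have "ln (real n) - ln (real (Suc n)) \<le> - 1 / real (Suc n)"
    using n by (simp add: ln_div field_simps)
  then have "inverse (real (Suc n)) \<le> ln (Suc n) - ln n" by (simp add: field_simps)
  then show ?case using step by (simp add: harm_Suc)
qed

lemma inv_le_aux:
  fixes c d :: real
  assumes "c \<ge> d" "d > 0"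
  shows "1 / c \<le> 1 / d"
  using assms by (simp add: divide_simps)

lemma inv_one_minus_ee:
  assumes q: "q > 0" and r: "0 < r" "r < q"
  shows "1 / cmod (1 - ee q r) \<le> real_of_int q / (2 * real_of_int r) + real_of_int q / (2 * real_of_int (q - r))"
proof -
  have A: "real_of_int q / (2 * real_of_int r) \<ge> 0" "real_of_int q / (2 * real_of_int (q - r)) \<ge> 0"
    using q r by simp_all
  show ?thesis
  proof (cases "2 * r \<le> q")
    case True
    have "cmod (1 - ee q r) \<ge> 2 * real_of_int r / real_of_int q" by (rule one_minus_ee_lower[OF q r(1) True])
    moreover have "2 * real_of_int r / real_of_int q > 0" using q r by simp
    ultimately have "1 / cmod (1 - ee q r) \<le> 1 / (2 * real_of_int r / real_of_int q)"
      by (rule inv_le_aux)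
    also have "\<dots> = real_of_int q / (2 * real_of_int r)" by simp
    finally show ?thesis using A by linarith
  next
    case False
    have "ee q r = ee q (q * 1 + (- (q - r)))" by simp
    also have "\<dots> = ee q (- (q - r))" using q by (simp only: ee_add ee_mult_q) simp
    finally have "cmod (1 - ee q r) = cmod (cnj (1 - ee q (q - r)))" by (simp add: cnj_ee)
    also have "\<dots> = cmod (1 - ee q (q - r))" by (rule complex_mod_cnj)
    finally have e: "cmod (1 - ee q r) = cmod (1 - ee q (q - r))" .
    have "0 < q - r" "2 * (q - r) \<le> q" using r False by auto
    then have "cmod (1 - ee q (q - r)) \<ge> 2 * real_of_int (q - r) / real_of_int q"
      by (intro one_minus_ee_lower[OF q])
    moreover have "2 * real_of_int (q - r) / real_of_int q > 0" using q r by simp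
    ultimately have "1 / cmod (1 - ee q r) \<le> 1 / (2 * real_of_int (q - r) / real_of_int q)" unfolding e
      by (rule inv_le_aux)
    also have "\<dots> = real_of_int q / (2 * real_of_int (q - r))" by simp
    finally show ?thesis using A by linarith
  qed
qed

lemma harm_sum:
  assumes q: "q \<ge> 2"
  shows "(\<Sum>r\<in>{1..q-1}. real_of_int q / (2 * real_of_int r) + real_of_int q / (2 * real_of_int (q - r))) \<le> real_of_int q * (1 + ln (real_of_int q))"
proof -
  have refl: "(\<Sum>r\<in>{1..q-1}. real_of_int q / (2 * real_of_int (q - r))) = (\<Sum>r\<in>{1..q-1}. real_of_int q / (2 * real_of_int r))"
    by (rule sum.reindex_bij_witness[of _ "\<lambda>r. q - r" "\<lambda>r. q - r"]) (auto simp: of_int_diff)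
  have h: "(\<Sum>r\<in>{1..q-1}. 1 / real_of_int r) = harm (nat (q - 1))"
    unfolding sum_int_nat1 harm_altdef by (simp add: add.commute inverse_eq_divide)
  have "(\<Sum>r\<in>{1..q-1}. real_of_int q / (2 * real_of_int r) + real_of_int q / (2 * real_of_int (q - r)))
      = 2 * (\<Sum>r\<in>{1..q-1}. real_of_int q / (2 * real_of_int r))" by (simp only: sum.distrib refl)
  also have "\<dots> = real_of_int q * (\<Sum>r\<in>{1..q-1}. 1 / real_of_int r)" by (simp add: sum_distrib_left)
  also have "\<dots> = real_of_int q * harm (nat (q - 1))" by (simp only: h)
  also have "\<dots> \<le> real_of_int q * (1 + ln (real (nat (q - 1))))" using q harm_le_ln[of "nat (q - 1)"] by simp
  also have "\<dots> \<le> real_of_int q * (1 + ln (real_of_int q))" using q by simp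
  finally show ?thesis .
qed


lemma ee_cong: "q \<noteq> 0 \<Longrightarrow> [a = b] (mod q) \<Longrightarrow> ee q a = ee q b"
  unfolding cong_def by (metis ee_mod)

lemma shift_sum:
  fixes f :: "int \<Rightarrow> 'a::comm_monoid_add"
  assumes q: "q > 0" and per: "\<And>x. f (x mod q) = f x"
  shows "(\<Sum>t\<in>{0..q-1}. f (y + t)) = (\<Sum>x\<in>{0..q-1}. f x)"
proof (rule sum.reindex_bij_witness[of _ "\<lambda>x. (x - y) mod q" "\<lambda>t. (y + t) mod q"])
  fix t assume t: "t \<in> {0..q-1}"
  show "((y + t) mod q - y) mod q = t" using t q by (simp add: mod_diff_left_eq)
  show "(y + t) mod q \<in> {0..q-1}" using q by simp
  show "f ((y + t) mod q) = f (y + t)" by (rule per)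
next
  fix x assume x: "x \<in> {0..q-1}"
  show "(y + (x - y) mod q) mod q = x" using x q by (simp add: mod_add_right_eq)
  show "(x - y) mod q \<in> {0..q-1}" using q by simp
qed

lemma count_bound:
  fixes q h t :: int
  assumes q: "prime q" and h: "\<not> q dvd h" and t: "t \<in> {0..q-1}" and d: "q dvd 2 * h * t"
  shows "t \<in> {0, 1}"
proof -
  have "q dvd 2 \<or> q dvd h \<or> q dvd t" using d q by (simp add: prime_dvd_mult_iff)
  then have "q dvd 2 \<or> q dvd t" using h by blast
  then show ?thesis
  proof
    assume "q dvd 2"
    then have "q \<le> 2" by (simp add: zdvd_imp_le)
    then show ?thesis using t by auto
  next
    assume "q dvd t"
    then obtain k where k: "t = q * k" by (auto elim: dvdE)
    have "q > 1" using q prime_gt_1_int by blast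
    with k t have "k = 0"
      by (smt (verit, ccfv_SIG) atLeastAtMost_iff mult_le_cancel_left1 mult_less_0_iff zero_less_mult_iff)
    then show ?thesis using k by simp
  qed
qed

lemma G_bound:
  fixes q h l :: int
  assumes q: "prime q" and h: "\<not> q dvd h"
  shows "cmod (\<Sum>x\<in>{0..q-1}. ee q (h * x^2 + l * x)) \<le> sqrt (2 * real_of_int q)"
proof -
  define X where "X = {0..q-1}"
  define F where "F x = h * x^2 + l * x" for x
  have q0: "q > 0" using q prime_gt_0_int by blast
  define G where "G = (\<Sum>x\<in>X. ee q (F x))"
  have "G * cnj G = (\<Sum>x\<in>X. ee q (F x)) * (\<Sum>y\<in>X. ee q (- F y))"
    by (simp add: G_def cnj_sum cnj_ee)
  also have "\<dots> = (\<Sum>x\<in>X. \<Sum>y\<in>X. ee q (F x - F y))"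
    by (simp add: sum_product ee_add[symmetric])
  also have "\<dots> = (\<Sum>y\<in>X. \<Sum>x\<in>X. ee q (F x - F y))"
    by (rule sum.swap)
  also have "\<dots> = (\<Sum>y\<in>X. \<Sum>t\<in>X. ee q (F (y + t) - F y))"
  proof (rule sum.cong[OF refl])
    fix y
    have per: "ee q (F (x mod q) - F y) = ee q (F x - F y)" for x
    proof (rule ee_cong)
      show "q \<noteq> 0" using q0 by simp
      have "[x mod q = x] (mod q)" by (simp add: cong_def)
      then show "[F (x mod q) - F y = F x - F y] (mod q)" unfolding F_def
        by (intro cong_diff cong_add cong_mult cong_pow cong_refl)
    qed
    show "(\<Sum>x\<in>X. ee q (F x - F y)) = (\<Sum>t\<in>X. ee q (F (y + t) - F y))"
      unfolding X_def using shift_sum[of q "\<lambda>x. ee q (F x - F y)" y, OF q0 per] by simp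
  qed
  also have "\<dots> = (\<Sum>y\<in>X. \<Sum>t\<in>X. ee q (F t) * ee q (y * (2 * h * t)))"
  proof -
    have eq: "ee q (F (y + t) - F y) = ee q (F t) * ee q (y * (2 * h * t))" for y t
    proof -
      have "F (y + t) - F y = F t + y * (2 * h * t)"
        unfolding F_def by (simp add: algebra_simps power2_eq_square)
      then show ?thesis by (simp only: ee_add)
    qed
    show ?thesis by (simp only: eq)
  qed
  also have "\<dots> = (\<Sum>t\<in>X. \<Sum>y\<in>X. ee q (F t) * ee q (y * (2 * h * t)))"
    by (rule sum.swap)
  also have "\<dots> = (\<Sum>t\<in>X. ee q (F t) * (\<Sum>y\<in>X. ee q (y * (2 * h * t))))"
    by (simp add: sum_distrib_left)
  also have "\<dots> = (\<Sum>t\<in>X. ee q (F t) * (if q dvd 2 * h * t then of_int q else 0))"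
    unfolding X_def using orth[OF q0] by simp
  finally have E: "G * cnj G = (\<Sum>t\<in>X. ee q (F t) * (if q dvd 2 * h * t then of_int q else 0))" .
  have "cmod (G * cnj G) \<le> (\<Sum>t\<in>X. cmod (ee q (F t) * (if q dvd 2 * h * t then of_int q else 0)))"
    unfolding E by (rule norm_sum)
  also have "\<dots> \<le> (\<Sum>t\<in>X. (if t \<in> {0, 1} then real_of_int q else 0))"
  proof (rule sum_mono)
    fix t assume t: "t \<in> X"
    show "cmod (ee q (F t) * (if q dvd 2 * h * t then of_int q else 0)) \<le> (if t \<in> {0, 1} then real_of_int q else 0)"
      using count_bound[OF q h, of t] t q0 unfolding X_def by (auto simp: norm_mult)
  qed
  also have "\<dots> = (\<Sum>t\<in>X \<inter> {0, 1}. real_of_int q)"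
    by (rule sum.inter_restrict[symmetric]) (simp add: X_def)
  also have "\<dots> = real (card (X \<inter> {0, 1})) * real_of_int q" by simp
  also have "\<dots> \<le> 2 * real_of_int q"
  proof -
    have "card (X \<inter> {0, 1}) \<le> card {0::int, 1}" by (intro card_mono) auto
    then have "real (card (X \<inter> {0, 1})) \<le> 2" by simp
    then show ?thesis using q0 by (intro mult_right_mono) auto
  qed
  finally have "cmod (G * cnj G) \<le> 2 * real_of_int q" .
  moreover have "cmod (G * cnj G) = (cmod G)^2"
    by (simp add: norm_mult power2_eq_square)
  ultimately have "(cmod G)^2 \<le> 2 * real_of_int q" by simp
  then have "cmod G \<le> sqrt (2 * real_of_int q)" by (rule real_le_rsqrt)
  then show ?thesis by (simp add: G_def F_def X_def)
qed


lemma U_decomp: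
  assumes q0: "q > 0"
  shows "U_sum q a b l m N = (1 / of_int q) * (\<Sum>h\<in>{0..q-1}. ee q (- (h * b)) *
     (\<Sum>x\<in>{0..q-1}. ee q (h * x^2 + l * x)) * (\<Sum>n\<in>{1..\<lfloor>N\<rfloor>}. ee q (n * (- (h * (a * m))))))"
proof -
  define X where "X = {0..q-1}"
  define M where "M = \<lfloor>N\<rfloor>"
  define K where "K n x = x^2 - (a * m * n + b)" for n x
  have fX: "finite X" by (simp add: X_def)
  have "U_sum q a b l m N = (\<Sum>n\<in>{1..M}. \<Sum>x\<in>{x\<in>X. [x^2 = a*m*n + b] (mod q)}. ee q (l * x))"
    unfolding U_sum_def ee_def X_def M_def ..
  also have "\<dots> = (\<Sum>n\<in>{1..M}. \<Sum>x\<in>X. if q dvd K n x then ee q (l * x) else 0)"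
    by (simp add: sum.inter_filter[OF fX] cong_iff_dvd_diff K_def)
  also have "\<dots> = (\<Sum>n\<in>{1..M}. \<Sum>x\<in>X. (1 / of_int q) * (\<Sum>h\<in>X. ee q (l * x) * ee q (h * K n x)))"
  proof (intro sum.cong refl)
    fix n x
    have "(\<Sum>h\<in>X. ee q (l * x) * ee q (h * K n x)) = ee q (l * x) * (if q dvd K n x then of_int q else 0)"
      unfolding X_def by (simp add: sum_distrib_left[symmetric] orth[OF q0])
    then show "(if q dvd K n x then ee q (l * x) else 0) = (1 / of_int q) * (\<Sum>h\<in>X. ee q (l * x) * ee q (h * K n x))"
      using q0 by simp
  qed
  also have "\<dots> = (1 / of_int q) * (\<Sum>n\<in>{1..M}. \<Sum>x\<in>X. \<Sum>h\<in>X. ee q (l * x) * ee q (h * K n x))"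
    by (simp add: sum_distrib_left)
  also have "(\<Sum>n\<in>{1..M}. \<Sum>x\<in>X. \<Sum>h\<in>X. ee q (l * x) * ee q (h * K n x))
      = (\<Sum>n\<in>{1..M}. \<Sum>h\<in>X. \<Sum>x\<in>X. ee q (l * x) * ee q (h * K n x))"
    by (intro sum.cong refl sum.swap)
  also have "\<dots> = (\<Sum>h\<in>X. \<Sum>n\<in>{1..M}. \<Sum>x\<in>X. ee q (l * x) * ee q (h * K n x))"
    by (rule sum.swap)
  also have "\<dots> = (\<Sum>h\<in>X. \<Sum>n\<in>{1..M}. \<Sum>x\<in>X. ee q (- (h * b)) * (ee q (n * (- (h * (a * m)))) * ee q (h * x^2 + l * x)))"
  proof (intro sum.cong refl)
    fix h n x
    have "l * x + h * K n x = - (h * b) + (n * (- (h * (a * m))) + (h * x^2 + l * x))"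
      unfolding K_def by (simp add: algebra_simps)
    then show "ee q (l * x) * ee q (h * K n x) = ee q (- (h * b)) * (ee q (n * (- (h * (a * m)))) * ee q (h * x^2 + l * x))"
      by (metis ee_add)
  qed
  also have "\<dots> = (\<Sum>h\<in>X. ee q (- (h * b)) * (\<Sum>x\<in>X. ee q (h * x^2 + l * x)) * (\<Sum>n\<in>{1..M}. ee q (n * (- (h * (a * m))))))"
  proof (intro sum.cong refl)
    fix h
    show "(\<Sum>n\<in>{1..M}. \<Sum>x\<in>X. ee q (- (h * b)) * (ee q (n * (- (h * (a * m)))) * ee q (h * x^2 + l * x)))
        = ee q (- (h * b)) * (\<Sum>x\<in>X. ee q (h * x^2 + l * x)) * (\<Sum>n\<in>{1..M}. ee q (n * (- (h * (a * m)))))"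
      (is "?L = ?R")
    proof -
      have "?L = (\<Sum>x\<in>X. \<Sum>n\<in>{1..M}. ee q (- (h * b)) * (ee q (n * (- (h * (a * m)))) * ee q (h * x^2 + l * x)))"
        by (rule sum.swap)
      also have "\<dots> = ?R" by (simp add: sum_distrib_left sum_distrib_right mult_ac)
      finally show ?thesis .
    qed
  qed
  finally show ?thesis unfolding X_def M_def .
qed


lemma small_dvd:
  fixes q d :: int
  assumes "q dvd d" "\<bar>d\<bar> < q"
  shows "d = 0"
proof (rule ccontr)
  assume "d \<noteq> 0"
  then have "\<bar>q\<bar> \<le> \<bar>d\<bar>" using dvd_imp_le_int assms(1) by blast
  moreover have "q \<le> \<bar>q\<bar>" by simp
  ultimately show False using assms(2) by linarith
qed

lemma arith1:
  fixes q s L :: real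
  assumes "q > 0"
  shows "1 / q * (s * (2 * (q * L))) = 2 * s * L"
  using assms by simp

lemma U_bound:
  fixes q a b l m :: int and N :: real
  assumes q: "prime q" and g: "gcd (a*m*l) q = 1"
  shows "cmod (U_sum q a b l m N) \<le> 2 * sqrt (2 * real_of_int q) * (1 + ln (real_of_int q))"
proof -
  have q0: "q > 0" using q prime_gt_0_int by blast
  have q2: "q \<ge> 2" using q prime_ge_2_int by blast
  have nd1: "\<not> q dvd 1" using q not_prime_unit by blast
  have ndl: "\<not> q dvd l"
  proof
    assume "q dvd l"
    then have "q dvd a*m*l" by simp
    then have "q dvd gcd (a*m*l) q" by simp
    then show False using g nd1 by simp
  qed
  have ndc: "\<not> q dvd (a*m)"
  proof
    assume "q dvd a*m"
    then have "q dvd a*m*l" by simp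
    then have "q dvd gcd (a*m*l) q" by simp
    then show False using g nd1 by simp
  qed
  define X where "X = {0..q-1}"
  define H where "H = {1..q-1}"
  define G where "G h = (\<Sum>x\<in>X. ee q (h * x^2 + l * x))" for h
  define S where "S h = (\<Sum>n\<in>{1..\<lfloor>N\<rfloor>}. ee q (n * (- (h * (a * m)))))" for h
  define \<rho> where "\<rho> h = (- (h * (a * m))) mod q" for h
  have U: "U_sum q a b l m N = (1 / of_int q) * (\<Sum>h\<in>X. ee q (- (h * b)) * G h * S h)"
    unfolding X_def G_def S_def by (rule U_decomp[OF q0])
  have U1: "cmod (U_sum q a b l m N) = (1 / real_of_int q) * cmod (\<Sum>h\<in>X. ee q (- (h * b)) * G h * S h)"
    unfolding U using q0 by (simp add: norm_mult norm_divide)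
  have "cmod (\<Sum>h\<in>X. ee q (- (h * b)) * G h * S h) \<le> (\<Sum>h\<in>X. cmod (G h) * cmod (S h))"
    by (rule order_trans[OF norm_sum]) (simp add: norm_mult)
  also have "(\<Sum>h\<in>X. cmod (G h) * cmod (S h)) = (\<Sum>h\<in>H. cmod (G h) * cmod (S h))"
  proof -
    have "X = insert 0 H" "0 \<notin> H" using q0 by (auto simp: X_def H_def)
    moreover have "G 0 = 0"
      unfolding G_def X_def using orth[OF q0, of l] ndl by (simp add: mult.commute)
    ultimately show ?thesis by (simp add: H_def)
  qed
  also have "\<dots> \<le> (\<Sum>h\<in>H. sqrt (2 * real_of_int q) * (2 / cmod (1 - ee q (\<rho> h))))"
  proof (rule sum_mono)
    fix h assume h: "h \<in> H"
    have ndh: "\<not> q dvd h" using h small_dvd[of q h] by (auto simp: H_def)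
    have nd: "\<not> q dvd (- (h * (a * m)))" using ndh ndc q by (simp add: prime_dvd_mult_iff)
    have "cmod (G h) \<le> sqrt (2 * real_of_int q)" unfolding G_def X_def by (rule G_bound[OF q ndh])
    moreover have "cmod (S h) \<le> 2 / cmod (1 - ee q (\<rho> h))"
      unfolding S_def \<rho>_def ee_mod[OF q0[THEN less_imp_neq, symmetric]] by (rule S_bound[OF q0 nd])
    ultimately show "cmod (G h) * cmod (S h) \<le> sqrt (2 * real_of_int q) * (2 / cmod (1 - ee q (\<rho> h)))"
      using q0 by (intro mult_mono) auto
  qed
  also have "\<dots> = sqrt (2 * real_of_int q) * (\<Sum>h\<in>H. 2 / cmod (1 - ee q (\<rho> h)))"
    by (simp add: sum_distrib_left)
  finally have B1: "cmod (\<Sum>h\<in>X. ee q (- (h * b)) * G h * S h) \<le> sqrt (2 * real_of_int q) * (\<Sum>h\<in>H. 2 / cmod (1 - ee q (\<rho> h)))" .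
  have inj: "inj_on \<rho> H"
  proof (rule inj_onI)
    fix h1 h2 assume h: "h1 \<in> H" "h2 \<in> H" "\<rho> h1 = \<rho> h2"
    then have "q dvd (- (h1 * (a * m))) - (- (h2 * (a * m)))" unfolding \<rho>_def by (simp only: mod_eq_dvd_iff)
    moreover have "(- (h1 * (a * m))) - (- (h2 * (a * m))) = (h2 - h1) * (a * m)" by (simp add: algebra_simps)
    ultimately have "q dvd (h2 - h1) * (a * m)" by simp
    then have "q dvd (h2 - h1) \<or> q dvd (a * m)" using q by (simp only: prime_dvd_mult_iff)
    then have "q dvd (h2 - h1)" using ndc by blast
    moreover have "\<bar>h2 - h1\<bar> < q" using h by (auto simp: H_def)
    ultimately have "h2 - h1 = 0" by (rule small_dvd)
    then show "h1 = h2" by simp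
  qed
  have sub: "\<rho> ` H \<subseteq> H"
  proof
    fix r assume "r \<in> \<rho> ` H"
    then obtain h where h: "h \<in> H" "r = \<rho> h" by blast
    have ndh: "\<not> q dvd h" using h small_dvd[of q h] by (auto simp: H_def)
    have nd: "\<not> q dvd (- (h * (a * m)))" using ndh ndc q by (simp add: prime_dvd_mult_iff)
    then have "r \<noteq> 0" using h by (simp add: \<rho>_def dvd_eq_mod_eq_0)
    moreover have "0 \<le> r" "r < q" using h q0 by (simp_all add: \<rho>_def)
    ultimately show "r \<in> H" by (simp add: H_def)
  qed
  have img: "\<rho> ` H = H" by (rule endo_inj_surj[OF _ sub inj]) (simp add: H_def)
  have R: "(\<Sum>h\<in>H. 2 / cmod (1 - ee q (\<rho> h))) = (\<Sum>r\<in>H. 2 / cmod (1 - ee q r))"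
    using sum.reindex[OF inj, of "\<lambda>r. 2 / cmod (1 - ee q r)"] unfolding img by (simp add: comp_def)
  have "(\<Sum>r\<in>H. 2 / cmod (1 - ee q r)) \<le> (\<Sum>r\<in>H. 2 * (real_of_int q / (2 * real_of_int r) + real_of_int q / (2 * real_of_int (q - r))))"
  proof (rule sum_mono)
    fix r assume "r \<in> H"
    then have "1 / cmod (1 - ee q r) \<le> real_of_int q / (2 * real_of_int r) + real_of_int q / (2 * real_of_int (q - r))"
      using inv_one_minus_ee[OF q0] by (simp add: H_def)
    then have "2 * (1 / cmod (1 - ee q r)) \<le> 2 * (real_of_int q / (2 * real_of_int r) + real_of_int q / (2 * real_of_int (q - r)))"
      by (rule mult_left_mono) simp
    then show "2 / cmod (1 - ee q r) \<le> 2 * (real_of_int q / (2 * real_of_int r) + real_of_int q / (2 * real_of_int (q - r)))"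
      by simp
  qed
  also have "\<dots> = 2 * (\<Sum>r\<in>H. real_of_int q / (2 * real_of_int r) + real_of_int q / (2 * real_of_int (q - r)))"
    by (simp add: sum_distrib_left)
  also have "\<dots> \<le> 2 * (real_of_int q * (1 + ln (real_of_int q)))"
    using harm_sum[OF q2] unfolding H_def by linarith
  finally have B2: "(\<Sum>h\<in>H. 2 / cmod (1 - ee q (\<rho> h))) \<le> 2 * (real_of_int q * (1 + ln (real_of_int q)))"
    unfolding R .
  have C: "cmod (\<Sum>h\<in>X. ee q (- (h * b)) * G h * S h) \<le> sqrt (2 * real_of_int q) * (2 * (real_of_int q * (1 + ln (real_of_int q))))"
  proof -
    have "sqrt (2 * real_of_int q) * (\<Sum>h\<in>H. 2 / cmod (1 - ee q (\<rho> h))) \<le> sqrt (2 * real_of_int q) * (2 * (real_of_int q * (1 + ln (real_of_int q))))"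
      using B2 by (rule mult_left_mono) (use q0 in simp)
    with B1 show ?thesis by (rule order_trans)
  qed
  have "cmod (U_sum q a b l m N) \<le> 1 / real_of_int q * (sqrt (2 * real_of_int q) * (2 * (real_of_int q * (1 + ln (real_of_int q)))))"
  proof -
    have "1 / real_of_int q \<ge> 0" using q0 by simp
    then show ?thesis unfolding U1 using C by (intro mult_left_mono) auto
  qed
  also have "\<dots> = 2 * sqrt (2 * real_of_int q) * (1 + ln (real_of_int q))"
    using q0 by (intro arith1) simp
  finally show ?thesis .
qed


lemma final_arith:
  fixes q :: int
  assumes q2: "q \<ge> 2"
  shows "2 * sqrt (2 * real_of_int q) * (1 + ln (real_of_int q)) \<le> 8 * sqrt (real_of_int q) * ln (real_of_int q)"
proof -
  define s where "s = sqrt (real_of_int q)"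
  define L where "L = ln (real_of_int q)"
  have s0: "s \<ge> 0" using q2 by (simp add: s_def)
  have "ln 2 \<le> L" unfolding L_def using q2 by simp
  then have L: "L \<ge> 2/3" using ln2_ge_two_thirds by linarith
  have r2: "sqrt 2 \<le> 3/2"
  proof -
    have "sqrt 2 \<le> sqrt ((3/2)^2)" by (intro real_sqrt_le_mono) (simp add: power2_eq_square)
    then show ?thesis by simp
  qed
  have h2: "1 + L \<le> 5/2 * L" using L by linarith
  have "sqrt 2 * (1 + L) \<le> 3/2 * (5/2 * L)"
    by (intro mult_mono r2 h2) (use L in simp_all)
  then have "2 * s * (sqrt 2 * (1 + L)) \<le> 2 * s * (3/2 * (5/2 * L))"
    by (rule mult_left_mono) (use s0 in simp)
  moreover have "2 * s * (3/2 * (5/2 * L)) \<le> 8 * s * L" using s0 L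
    by (simp add: algebra_simps mult_nonneg_nonneg)
  moreover have "2 * sqrt (2 * real_of_int q) * (1 + L) = 2 * s * (sqrt 2 * (1 + L))"
    by (simp add: s_def real_sqrt_mult)
  ultimately show ?thesis unfolding L_def[symmetric] s_def[symmetric] by linarith
qed

theorem theorem2p1:
  shows "\<exists>c>0. \<forall>(q::int) a b m l (N::real).
           prime q \<longrightarrow> gcd (a*m*l) q = 1 \<longrightarrow> N \<ge> 1 \<longrightarrow>
           cmod (U_sum q a b l m N) \<le> c * sqrt (real_of_int q) * ln (real_of_int q)"
proof (intro exI[of _ 8] conjI allI impI)
  fix q a b m l :: int and N :: real
  assume q: "prime q" and g: "gcd (a*m*l) q = 1"
  have q2: "q \<ge> 2" using q prime_ge_2_int by blast
  show "cmod (U_sum q a b l m N) \<le> 8 * sqrt (real_of_int q) * ln (real_of_int q)"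
    using U_bound[OF q g, of b N] final_arith[OF q2] by linarith
qed simp

end
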